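(* Let $(q_j)$ be a sequence of primes tending to infinity and, for each $j$, let $\chi_j$ be a Dirichlet character modulo $q_j$. For $t\ge0$ set $$A_j(t)=\frac{1}{\log q_j}\sum_{n<q_j^t}\frac{\chi_j(n)}{n},\qquad B_j(t)=\frac{1}{\log q_j}\sum_{n<q_j^t}\frac{\chi_j(n)\Lambda(n)}{n}.$$ Suppose that there are functions $A,B:[0,\infty)\to\mathbb C$ with $A_j(t)\to A(t)$ and $B_j(t)\to B(t)$ as $j\to\infty$ for every $t\ge0$, and that $|A(t)-A(s)|,|B(t)-B(s)|\le|t-s|$ for all $s,t\ge0$ (so that $A(t)=\int_0^t a(u)\,du$, $B(t)=\int_0^t b(u)\,du$ for measurable $a,b:[0,\infty)\to\mathbb C$ bounded in magnitude by $1$). Then $$ t\,a(t)=\int_0^t a(u)\,b(t-u)\,du$$ for almost every $t>0$.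
   Context: $\Lambda$ is the von Mangoldt function. *)

theory Defs
  imports "HOL-Analysis.Analysis" "HOL-Number_Theory.Number_Theory"
begin

definition mangoldt :: "nat \<Rightarrow> real" where
  "mangoldt n = (if primepow n then ln (real (aprimedivisor n)) else 0)"

definition dirichlet_char :: "nat \<Rightarrow> (nat \<Rightarrow> complex) \<Rightarrow> bool" where
  "dirichlet_char q chi \<longleftrightarrow>
     q > 0 \<and>
     (\<forall>n. chi (n + q) = chi n) \<and>
     (\<forall>m n. chi (m * n) = chi m * chi n) \<and>
     chi 1 = 1 \<and>
     (\<forall>n. chi n = 0 \<longleftrightarrow> \<not> coprime n q)"

definition charA :: "nat \<Rightarrow> (nat \<Rightarrow> complex) \<Rightarrow> real \<Rightarrow> complex" where
  "charA q chi t = (\<Sum>n\<in>{n. 1 \<le> n \<and> real n < real q powr t}. chi n / of_nat n) / of_real (ln (real q))"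

definition charB :: "nat \<Rightarrow> (nat \<Rightarrow> complex) \<Rightarrow> real \<Rightarrow> complex" where
  "charB q chi t = (\<Sum>n\<in>{n. 1 \<le> n \<and> real n < real q powr t}.
                     chi n * of_real (mangoldt n) / of_nat n) / of_real (ln (real q))"

end

theory Submission
  imports Defs
begin


lemma mg: "Defs.mangoldt n = (Prime_Powers.mangoldt n :: real)"
  by (simp add: Defs.mangoldt_def Prime_Powers.mangoldt_def)

lemma fin_below: "finite {n::nat. P n \<and> real n < x}"
  by (rule finite_subset[of _ "{..nat \<lceil>x\<rceil>}"]) (auto, linarith)

lemma conv_id:
  fixes f :: "nat \<Rightarrow> 'a::real_normed_field" and x :: real
  assumes mult: "\<And>m n. f (m*n) = f m * f n"
  shows "(\<Sum>n\<in>{n. 1\<le>n \<and> real n < x}. f n * of_real (ln (real n)) / of_nat n) =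
         (\<Sum>d\<in>{d. 1\<le>d \<and> real d < x}. f d * of_real (Defs.mangoldt d) / of_nat d *
              (\<Sum>m\<in>{m. 1\<le>m \<and> real m < x / real d}. f m / of_nat m))"
proof -
  define S where "S = {n::nat. 1\<le>n \<and> real n < x}"
  define T where "T = (\<lambda>d::nat. {m::nat. 1\<le>m \<and> real m < x / real d})"
  have finS: "finite S" unfolding S_def by (rule fin_below)
  have finT: "finite (T d)" for d unfolding T_def by (rule fin_below)
  have "(\<Sum>n\<in>S. f n * of_real (ln (real n)) / of_nat n) =
        (\<Sum>n\<in>S. \<Sum>d\<in>{d. d dvd n}. f n * of_real (Defs.mangoldt d) / of_nat n)"
  proof (rule sum.cong[OF refl])
    fix n assume "n \<in> S"
    then have "n \<noteq> 0" by (auto simp: S_def)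
    then have "(\<Sum>d | d dvd n. Prime_Powers.mangoldt d :: 'a) = of_real (ln (real n))"
      by (rule mangoldt_sum)
    moreover have "(\<Sum>d | d dvd n. Prime_Powers.mangoldt d :: 'a) = (\<Sum>d | d dvd n. of_real (Defs.mangoldt d))"
      by (simp add: mg)
    ultimately have eq: "(\<Sum>d\<in>{d. d dvd n}. of_real (Defs.mangoldt d)) = (of_real (ln (real n)) :: 'a)"
      by simp
    show "f n * of_real (ln (real n)) / of_nat n = (\<Sum>d\<in>{d. d dvd n}. f n * of_real (Defs.mangoldt d) / of_nat n)"
      by (subst eq[symmetric]) (simp add: sum_distrib_left sum_divide_distrib)
  qed
  also have "\<dots> = (\<Sum>(n,d)\<in>Sigma S (\<lambda>n. {d. d dvd n}). f n * of_real (Defs.mangoldt d) / of_nat n)"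
    by (rule sum.Sigma) (use finS in \<open>auto simp: S_def\<close>)
  also have "\<dots> = (\<Sum>(d,m)\<in>Sigma S T. f d * of_real (Defs.mangoldt d) / of_nat d * (f m / of_nat m))"
  proof (rule sum.reindex_bij_witness[of _ "\<lambda>(d,m). (d*m, d)" "\<lambda>(n,d). (d, n div d)"])
    fix p assume "p \<in> Sigma S T"
    then obtain d m where p: "p = (d,m)" "1\<le>d" "real d < x" "1 \<le> m" "real m < x / real d"
      by (auto simp: S_def T_def)
    have "real d * real m < x" using p by (simp add: field_simps)
    then show "(case case p of (d, m) \<Rightarrow> (d * m, d) of (n, d) \<Rightarrow> (d, n div d)) = p"
      "(case p of (d, m) \<Rightarrow> (d * m, d)) \<in> Sigma S (\<lambda>n. {d. d dvd n})"
      using p by (auto simp: S_def)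
  next
    fix p assume "p \<in> Sigma S (\<lambda>n. {d. d dvd n})"
    then obtain n d where p: "p = (n,d)" "1\<le>n" "real n < x" "d dvd n"
      by (auto simp: S_def)
    then obtain m where m: "n = d * m" by (auto elim: dvdE)
    have "d \<ge> 1" "m \<ge> 1" using p m by (auto simp: Suc_le_eq intro: Nat.gr0I)
    have "real d * real m < x" using p m by simp
    then have "real m < x / real d" using \<open>d \<ge> 1\<close> by (simp add: field_simps)
    moreover have "d \<le> n" using m \<open>m\<ge>1\<close> by simp
    then have "real d \<le> real n" by simp
    then have "real d < x" using p(3) by linarith
    ultimately show "(case case p of (n, d) \<Rightarrow> (d, n div d) of (d, m) \<Rightarrow> (d * m, d)) = p"
       "(case p of (n, d) \<Rightarrow> (d, n div d)) \<in> Sigma S T"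
      using p m \<open>d \<ge> 1\<close> \<open>m \<ge> 1\<close> by (auto simp: S_def T_def)
    show "(case case p of (n, d) \<Rightarrow> (d, n div d) of (d, m) \<Rightarrow> f d * of_real (Defs.mangoldt d) / of_nat d * (f m / of_nat m)) =
         (case p of (n, d) \<Rightarrow> f n * of_real (Defs.mangoldt d) / of_nat n)"
      using p m \<open>d \<ge> 1\<close> \<open>m \<ge> 1\<close> by (simp add: mult)
  qed
  also have "\<dots> = (\<Sum>d\<in>S. \<Sum>m\<in>T d. f d * of_real (Defs.mangoldt d) / of_nat d * (f m / of_nat m))"
    by (rule sum.Sigma[symmetric]) (use finS finT in auto)
  also have "\<dots> = (\<Sum>d\<in>S. f d * of_real (Defs.mangoldt d) / of_nat d * (\<Sum>m\<in>T d. f m / of_nat m))"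
    by (simp add: sum_distrib_left)
  finally show ?thesis by (simp add: S_def T_def)
qed


definition Hs :: "real \<Rightarrow> real" where
  "Hs y = (\<Sum>m\<in>{m::nat. 1\<le>m \<and> real m < y}. 1 / real m)"

lemma Hs_harm: "Hs y = harm (nat \<lceil>y\<rceil> - 1)"
proof -
  have "{m::nat. 1\<le>m \<and> real m < y} = {1..nat \<lceil>y\<rceil> - 1}"
    by (auto simp: less_ceiling_iff) linarith+
  then show ?thesis by (simp add: Hs_def harm_def divide_inverse)
qed

lemma Hs_nonneg: "Hs y \<ge> 0"
  unfolding Hs_def by (rule sum_nonneg) auto

lemma ln_le_Hs: assumes "y > 0" shows "ln y \<le> Hs y"
proof -
  define N where "N = nat \<lceil>y\<rceil> - 1"
  have "y \<le> real N + 1" using assms unfolding N_def by linarith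
  then have "ln y \<le> ln (real N + 1)" using assms by simp
  also have "\<dots> \<le> harm N" by (rule ln_le_harm)
  finally show ?thesis by (simp add: Hs_harm N_def)
qed

lemma Hs_le: assumes "y \<ge> 1" shows "Hs y \<le> 1 + ln y"
proof -
  define N where "N = nat \<lceil>y\<rceil> - 1"
  have Ny: "real N < y" unfolding N_def using assms by linarith
  show ?thesis
  proof (cases "N = 0")
    case True
    have "Hs y = harm N" by (simp add: Hs_harm N_def)
    then show ?thesis using assms True by (simp add: harm_def)
  next
    case False
    have "harm N - ln (real N) \<le> harm 1 - ln (real (1::nat))"
      by (rule euler_mascheroni_sequence_decreasing) (use False in auto)
    then have "harm N \<le> 1 + ln (real N)" by (simp add: harm_def)
    moreover have "ln (real N) \<le> ln y" using Ny False assms by simp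
    ultimately have h: "harm N \<le> 1 + ln y" by linarith
    have "Hs y = harm N" by (simp add: Hs_harm N_def)
    with h show ?thesis by simp
  qed
qed

lemma mg_nonneg: "Defs.mangoldt d \<ge> 0"
  by (simp add: mg mangoldt_nonneg)

lemma chebyshev:
  assumes "x \<ge> 1"
  shows "(\<Sum>d\<in>{d::nat. 1\<le>d \<and> real d < x}. Defs.mangoldt d / real d) \<le> 2 + 4 * ln x"
proof (cases "x = 1")
  case True
  then have "{d::nat. 1\<le>d \<and> real d < x} = {}" by auto
  then show ?thesis using True by simp
next
  case False
  then have x1: "x > 1" using assms by simp
  define X where "X = x * x"
  have "1*1 < x*x" by (rule mult_strict_mono) (use x1 in auto)
  then have X1: "X > 1" by (simp add: X_def)
  have "x * 1 < x * x" by (rule mult_strict_left_mono) (use x1 in auto)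
  then have xX: "x < X" by (simp add: X_def)
  define s where "s = (\<Sum>d\<in>{d::nat. 1\<le>d \<and> real d < x}. Defs.mangoldt d / real d)"
  have lnX: "ln X = 2 * ln x" using x1 by (simp add: X_def ln_mult)
  have "ln x * s = (\<Sum>d\<in>{d::nat. 1\<le>d \<and> real d < x}. Defs.mangoldt d / real d * ln x)"
    by (simp add: s_def sum_distrib_left mult.commute)
  also have "\<dots> \<le> (\<Sum>d\<in>{d::nat. 1\<le>d \<and> real d < x}. Defs.mangoldt d / real d * ln (X / real d))"
  proof (rule sum_mono)
    fix d assume d: "d \<in> {d::nat. 1\<le>d \<and> real d < x}"
    then have "ln (real d) \<le> ln x" using x1 by simp
    then have "ln x \<le> ln (X / real d)" using d x1 X1 by (simp add: ln_div lnX)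
    then show "Defs.mangoldt d / real d * ln x \<le> Defs.mangoldt d / real d * ln (X / real d)"
      by (intro mult_left_mono) (auto intro: divide_nonneg_nonneg mg_nonneg)
  qed
  also have "\<dots> \<le> (\<Sum>d\<in>{d::nat. 1\<le>d \<and> real d < X}. Defs.mangoldt d / real d * ln (X / real d))"
  proof (rule sum_mono2[OF fin_below])
    show "{d::nat. 1\<le>d \<and> real d < x} \<subseteq> {d::nat. 1\<le>d \<and> real d < X}"
      using xX by auto
  next
    fix d assume "d \<in> {d::nat. 1\<le>d \<and> real d < X} - {d::nat. 1\<le>d \<and> real d < x}"
    then show "0 \<le> Defs.mangoldt d / real d * ln (X / real d)"
      by (intro mult_nonneg_nonneg divide_nonneg_nonneg mg_nonneg) auto
  qed
  also have "\<dots> \<le> (\<Sum>d\<in>{d::nat. 1\<le>d \<and> real d < X}. Defs.mangoldt d / real d * Hs (X / real d))"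
    by (intro sum_mono mult_left_mono ln_le_Hs divide_nonneg_nonneg mg_nonneg) (use X1 in auto)
  also have "\<dots> = (\<Sum>n\<in>{n::nat. 1\<le>n \<and> real n < X}. 1 * ln (real n) / real n)"
    using conv_id[of "\<lambda>_. 1::real" X] by (simp add: Hs_def sum_divide_distrib)
  also have "\<dots> \<le> (\<Sum>n\<in>{n::nat. 1\<le>n \<and> real n < X}. ln X * (1 / real n))"
    by (intro sum_mono) (auto simp: divide_right_mono)
  also have "\<dots> = ln X * Hs X" by (simp add: Hs_def sum_distrib_left)
  also have "\<dots> \<le> ln X * (1 + ln X)"
    using X1 by (intro mult_left_mono Hs_le) auto
  finally have "ln x * s \<le> ln x * (2 + 4 * ln x)" by (simp add: lnX algebra_simps)
  then have "s \<le> 2 + 4 * ln x" using x1 by (simp add: mult_le_cancel_left)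
  then show ?thesis by (simp add: s_def)
qed



lemma char_norm:
  assumes "dirichlet_char q chi"
  shows "norm (chi n) \<le> 1"
proof -
  have q: "q > 0" and per: "\<And>n. chi (n + q) = chi n" and mult: "\<And>m n. chi (m*n) = chi m * chi n"
    and one: "chi 1 = 1" and z: "\<And>n. chi n = 0 \<longleftrightarrow> \<not> coprime n q"
    using assms by (auto simp: dirichlet_char_def)
  have perk: "chi (r + k*q) = chi r" for r k
  proof (induction k)
    case (Suc k)
    have "chi (r + Suc k * q) = chi ((r + k*q) + q)" by (simp add: algebra_simps)
    also have "\<dots> = chi (r + k*q)" by (rule per)
    finally show ?case using Suc by simp
  qed simp
  have modq: "chi n = chi (n mod q)" for n
    using perk[of "n mod q" "n div q"] by (simp add: mod_div_mult_eq)
  have pw: "chi (n^k) = chi n ^ k" for k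
    by (induction k) (use one in \<open>simp_all add: mult\<close>)
  show ?thesis
  proof (cases "coprime n q")
    case False
    then have "chi n = 0" using z by blast
    then show ?thesis by simp
  next
    case True
    have "[n ^ totient q = 1] (mod q)" by (rule euler_theorem) (use True in auto)
    then have "(n ^ totient q) mod q = 1 mod q" by (simp add: cong_def)
    then have "chi (n ^ totient q) = chi 1"
      by (metis modq)
    then have "chi n ^ totient q = 1" by (metis pw one)
    then have "norm (chi n) ^ totient q = 1" by (metis norm_power norm_one)
    moreover have "totient q > 0" using q by simp
    ultimately have "norm (chi n) = 1"
      using power_eq_iff_eq_base[of "totient q" "norm (chi n)" 1] by simp
    then show ?thesis by simp
  qed
qed



lemma unique_real:
  fixes f :: "real \<Rightarrow> real" and T C :: real
  assumes f[measurable]: "f \<in> borel_measurable borel"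
    and bnd: "\<And>x. x \<in> {0..T} \<Longrightarrow> \<bar>f x\<bar> \<le> C"
    and zero: "\<And>t. t \<in> {0..T} \<Longrightarrow> (LINT x:{0..t}|lborel. f x) = 0"
  shows "AE x in lborel. x \<in> {0..T} \<longrightarrow> f x = 0"
proof -
  define g where "g x = indicator {0..T} x * f x" for x
  have g_meas[measurable]: "g \<in> borel_measurable borel" unfolding g_def by measurable
  have gint: "integrable lborel g"
  proof (rule Bochner_Integration.integrable_bound[where f="\<lambda>x. C * indicator {0..T} x"])
    show "integrable lborel (\<lambda>x. C * indicator {0..T} x)"
      by (intro integrable_mult_right integrable_real_indicator) (auto simp: emeasure_lborel_Icc_eq)
    show "g \<in> borel_measurable lborel" by simp
    show "AE x in lborel. norm (g x) \<le> norm (C * indicator {0..T} x)"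
    proof (intro AE_I2)
      fix x show "norm (g x) \<le> norm (C * indicator {0..T} x)"
      proof (cases "x \<in> {0..T}")
        case True
        then show ?thesis using bnd[OF True] by (simp add: g_def)
      next
        case False
        then show ?thesis by (simp add: g_def)
      qed
    qed
  qed
  have setint: "set_integrable lborel A f" if "A \<subseteq> {0..T}" "A \<in> sets borel" for A
  proof -
    have "integrable lborel (\<lambda>x. indicator A x *\<^sub>R g x)"
      using gint that by (intro integrable_mult_indicator) auto
    moreover have "(\<lambda>x. indicator A x *\<^sub>R g x) = (\<lambda>x. indicator A x *\<^sub>R f x)"
      using that by (auto simp: g_def indicator_def fun_eq_iff)
    ultimately show ?thesis by (simp add: set_integrable_def)
  qed
  have zero_Ioi: "(\<integral>y. g y * indicator {x<..} y \<partial>lborel) = 0" for x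
  proof -
    have eq: "(\<integral>y. g y * indicator {x<..} y \<partial>lborel) = (LINT y:{0..T} \<inter> {x<..}|lborel. f y)"
      unfolding set_lebesgue_integral_def
      by (intro Bochner_Integration.integral_cong) (auto simp: g_def indicator_def)
    show ?thesis
    proof (cases "x < 0")
      case True
      then have "{0..T} \<inter> {x<..} = {0..T}" by auto
      then show ?thesis using eq zero[of T] by (cases "T \<ge> 0") (auto simp: set_lebesgue_integral_def)
    next
      case False
      show ?thesis
      proof (cases "x < T")
        case False
        then have "{0..T} \<inter> {x<..} = {}" by auto
        then show ?thesis using eq by (simp add: set_lebesgue_integral_def)
      next
        case True
        have un: "{0..T} = {0..x} \<union> {x<..T}" using \<open>\<not> x < 0\<close> True by auto
        have "(LINT y:{0..T}|lborel. f y) = (LINT y:{0..x}|lborel. f y) + (LINT y:{x<..T}|lborel. f y)"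
          unfolding un by (rule set_integral_Un) (use \<open>\<not> x < 0\<close> True in \<open>auto intro!: setint\<close>)
        moreover have "(LINT y:{0..T}|lborel. f y) = 0" "(LINT y:{0..x}|lborel. f y) = 0"
          using zero \<open>\<not> x < 0\<close> True by auto
        moreover have "{0..T} \<inter> {x<..} = {x<..T}" using \<open>\<not> x < 0\<close> by auto
        ultimately show ?thesis using eq by simp
      qed
    qed
  qed
  define gp where "gp x = max 0 (g x)" for x
  define gn where "gn x = max 0 (- g x)" for x
  have gpn[measurable]: "gp \<in> borel_measurable borel" "gn \<in> borel_measurable borel"
    unfolding gp_def gn_def by measurable
  have gpi: "integrable lborel (\<lambda>y. gp y * indicator A y)" "integrable lborel (\<lambda>y. gn y * indicator A y)"
    if "A \<in> sets borel" for A
  proof -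
    have i1: "integrable lborel (\<lambda>y. indicator A y *\<^sub>R g y)"
      using that gint by (intro integrable_mult_indicator) auto
    have i2: "integrable lborel (\<lambda>y. max 0 (indicator A y *\<^sub>R g y))"
      by (rule integrable_max) (use i1 in auto)
    have i3: "integrable lborel (\<lambda>y. max 0 (- (indicator A y *\<^sub>R g y)))"
      by (rule integrable_max) (use i1 in auto)
    have e1: "(\<lambda>y. max 0 (indicator A y *\<^sub>R g y)) = (\<lambda>y. gp y * indicator A y)"
      by (auto simp: gp_def indicator_def fun_eq_iff)
    have e2: "(\<lambda>y. max 0 (- (indicator A y *\<^sub>R g y))) = (\<lambda>y. gn y * indicator A y)"
      by (auto simp: gn_def indicator_def fun_eq_iff)
    show "integrable lborel (\<lambda>y. gp y * indicator A y)" using i2 e1 by simp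
    show "integrable lborel (\<lambda>y. gn y * indicator A y)" using i3 e2 by simp
  qed
  have eqmeas: "emeasure (density lborel (\<lambda>y. ennreal (gp y))) A = emeasure (density lborel (\<lambda>y. ennreal (gn y))) A"
    if A: "A \<in> sets borel" and zA: "(\<integral>y. g y * indicator A y \<partial>lborel) = 0" for A
  proof -
    have "emeasure (density lborel (\<lambda>y. ennreal (gp y))) A = (\<integral>\<^sup>+ y. ennreal (gp y) * indicator A y \<partial>lborel)"
      using A by (subst emeasure_density) auto
    also have "\<dots> = (\<integral>\<^sup>+ y. ennreal (gp y * indicator A y) \<partial>lborel)"
      by (intro nn_integral_cong) (auto simp: indicator_def)
    also have "\<dots> = ennreal (\<integral>y. gp y * indicator A y \<partial>lborel)"
      using gpi[OF A] by (intro nn_integral_eq_integral) (auto simp: gp_def)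
    also have "(\<integral>y. gp y * indicator A y \<partial>lborel) = (\<integral>y. gn y * indicator A y \<partial>lborel)"
    proof -
      have "(\<integral>y. gp y * indicator A y \<partial>lborel) - (\<integral>y. gn y * indicator A y \<partial>lborel)
          = (\<integral>y. gp y * indicator A y - gn y * indicator A y \<partial>lborel)"
        using gpi[OF A] by simp
      also have "\<dots> = (\<integral>y. g y * indicator A y \<partial>lborel)"
        by (intro Bochner_Integration.integral_cong) (auto simp: gp_def gn_def indicator_def)
      finally show ?thesis using zA by simp
    qed
    also have "ennreal (\<integral>y. gn y * indicator A y \<partial>lborel) = (\<integral>\<^sup>+ y. ennreal (gn y * indicator A y) \<partial>lborel)"
      using gpi[OF A] by (intro nn_integral_eq_integral[symmetric]) (auto simp: gn_def)
    also have "\<dots> = (\<integral>\<^sup>+ y. ennreal (gn y) * indicator A y \<partial>lborel)"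
      by (intro nn_integral_cong) (auto simp: indicator_def)
    also have "\<dots> = emeasure (density lborel (\<lambda>y. ennreal (gn y))) A"
      using A by (subst emeasure_density) auto
    finally show ?thesis .
  qed
  have "density lborel (\<lambda>y. ennreal (gp y)) = density lborel (\<lambda>y. ennreal (gn y))"
  proof (rule measure_eqI_lessThan)
    show "sets (density lborel (\<lambda>y. ennreal (gp y))) = sets borel"
         "sets (density lborel (\<lambda>y. ennreal (gn y))) = sets borel" by auto
    fix x :: real
    show "emeasure (density lborel (\<lambda>y. ennreal (gp y))) {x<..} = emeasure (density lborel (\<lambda>y. ennreal (gn y))) {x<..}"
      by (rule eqmeas) (auto simp: zero_Ioi)
    have "emeasure (density lborel (\<lambda>y. ennreal (gp y))) {x<..} = (\<integral>\<^sup>+ y. ennreal (gp y) * indicator {x<..} y \<partial>lborel)"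
      by (subst emeasure_density) auto
    also have "\<dots> = (\<integral>\<^sup>+ y. ennreal (gp y * indicator {x<..} y) \<partial>lborel)"
      by (intro nn_integral_cong) (auto simp: indicator_def)
    also have "\<dots> = ennreal (\<integral>y. gp y * indicator {x<..} y \<partial>lborel)"
      using gpi[of "{x<..}"] by (intro nn_integral_eq_integral) (auto simp: gp_def)
    finally show "emeasure (density lborel (\<lambda>y. ennreal (gp y))) {x<..} < \<infinity>" by simp
  qed
  then have "AE y in lborel. ennreal (gp y) = ennreal (gn y)"
    by (subst (asm) sigma_finite_measure.density_unique_iff[OF sigma_finite_lborel]) auto
  then show ?thesis
  proof (rule AE_mp, intro AE_I2 impI)
    fix y assume h: "ennreal (gp y) = ennreal (gn y)" and y: "y \<in> {0..T}"
    have "g y = 0"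
    proof (rule ccontr)
      assume "g y \<noteq> 0"
      then show False using h by (cases "g y > 0") (auto simp: gp_def gn_def)
    qed
    then show "f y = 0" using y by (simp add: g_def)
  qed
qed



lemma bnd_set_integrable:
  fixes g :: "real \<Rightarrow> 'b::{banach, second_countable_topology}"
  assumes g[measurable]: "g \<in> borel_measurable borel" and A[measurable]: "A \<in> sets borel"
    and fin: "emeasure lborel A < \<infinity>" and bnd: "\<And>x. x \<in> A \<Longrightarrow> norm (g x) \<le> C"
  shows "set_integrable lborel A g"
  unfolding set_integrable_def
proof (rule Bochner_Integration.integrable_bound[where f="\<lambda>x. C * indicator A x"])
  show "integrable lborel (\<lambda>x. C * indicator A x)"
    using fin by (intro integrable_mult_right integrable_real_indicator) auto
  show "(\<lambda>x. indicator A x *\<^sub>R g x) \<in> borel_measurable lborel" by simp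
  show "AE x in lborel. norm (indicator A x *\<^sub>R g x) \<le> norm (C * indicator A x)"
  proof (intro AE_I2)
    fix x show "norm (indicator A x *\<^sub>R g x) \<le> norm (C * indicator A x)"
    proof (cases "x \<in> A")
      case True
      then show ?thesis using bnd[OF True] by simp
    next
      case False
      then show ?thesis by simp
    qed
  qed
qed

lemma set_int_bound:
  fixes g :: "real \<Rightarrow> 'b::{banach, second_countable_topology}"
  assumes g[measurable]: "g \<in> borel_measurable borel" and A[measurable]: "A \<in> sets borel"
    and fin: "emeasure lborel A < \<infinity>" and bnd: "\<And>x. x \<in> A \<Longrightarrow> norm (g x) \<le> C"
  shows "norm (LINT x:A|lborel. g x) \<le> C * measure lborel A"
proof -
  have si: "set_integrable lborel A g" by (rule bnd_set_integrable[OF g A fin bnd])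
  have "norm (LINT x:A|lborel. g x) \<le> (LINT x:A|lborel. norm (g x))"
    by (rule set_integral_norm_bound[OF si])
  also have "\<dots> \<le> (LINT x:A|lborel. C)"
  proof (rule set_integral_mono)
    show "set_integrable lborel A (\<lambda>x. norm (g x))"
      by (rule bnd_set_integrable[where C=C]) (use fin bnd in auto)
    show "set_integrable lborel A (\<lambda>x. C)"
      by (rule bnd_set_integrable[where C="norm C"]) (use fin in auto)
  qed (use bnd in auto)
  also have "\<dots> = C * measure lborel A"
    using fin by (subst set_integral_const) auto
  finally show ?thesis .
qed

lemma fubini_box:
  fixes h :: "real \<Rightarrow> real \<Rightarrow> 'b::{banach, second_countable_topology}"
  assumes h[measurable]: "(\<lambda>(x,y). h x y) \<in> borel_measurable (lborel \<Otimes>\<^sub>M lborel)"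
    and bnd: "\<And>x y. x \<in> {0..t} \<Longrightarrow> y \<in> {0..t} \<Longrightarrow> norm (h x y) \<le> C"
  shows "(LINT x:{0..t}|lborel. LINT y:{0..t}|lborel. h x y) = (LINT y:{0..t}|lborel. LINT x:{0..t}|lborel. h x y)"
proof -
  have psf: "pair_sigma_finite lborel lborel"
    by (intro pair_sigma_finite.intro sigma_finite_lborel)
  define f where "f x y = indicator {0..t} x *\<^sub>R (indicator {0..t} y *\<^sub>R h x y)" for x y
  have int: "integrable (lborel \<Otimes>\<^sub>M lborel) (\<lambda>(x,y). f x y)"
  proof (rule Bochner_Integration.integrable_bound[where f="\<lambda>z. C * indicator ({0..t} \<times> {0..t}) z"])
    have "emeasure (lborel \<Otimes>\<^sub>M lborel) ({0..t} \<times> {0..t}) = emeasure lborel {0..t} * emeasure lborel {0..t}"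
      by (rule sigma_finite_measure.emeasure_pair_measure_Times[OF sigma_finite_lborel]) auto
    also have "\<dots> < \<infinity>" by (simp add: emeasure_lborel_Icc_eq ennreal_mult_less_top)
    finally show "integrable (lborel \<Otimes>\<^sub>M lborel) (\<lambda>z. C * indicator ({0..t} \<times> {0..t}) z)"
      by (intro integrable_mult_right integrable_real_indicator) auto
    show "(\<lambda>(x, y). f x y) \<in> borel_measurable (lborel \<Otimes>\<^sub>M lborel)"
      unfolding f_def by measurable
    show "AE z in lborel \<Otimes>\<^sub>M lborel. norm (case z of (x, y) \<Rightarrow> f x y) \<le> norm (C * indicator ({0..t} \<times> {0..t}) z)"
    proof (intro AE_I2)
      fix z :: "real \<times> real"
      obtain x y where z: "z = (x,y)" by (cases z)
      show "norm (case z of (x, y) \<Rightarrow> f x y) \<le> norm (C * indicator ({0..t} \<times> {0..t}) z)"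
      proof (cases "x \<in> {0..t} \<and> y \<in> {0..t}")
        case True
        then show ?thesis using bnd[of x y] z by (auto simp: f_def)
      next
        case False
        then show ?thesis using z by (auto simp: f_def indicator_def)
      qed
    qed
  qed
  have "(LINT x:{0..t}|lborel. LINT y:{0..t}|lborel. h x y) = (\<integral>x. \<integral>y. f x y \<partial>lborel \<partial>lborel)"
    unfolding set_lebesgue_integral_def f_def
    by (intro Bochner_Integration.integral_cong refl integral_scaleR_right[symmetric])
  also have "\<dots> = (\<integral>y. \<integral>x. f x y \<partial>lborel \<partial>lborel)"
    by (rule pair_sigma_finite.Fubini_integral[OF psf int, symmetric])
  also have "\<dots> = (LINT y:{0..t}|lborel. LINT x:{0..t}|lborel. h x y)"
    unfolding set_lebesgue_integral_def f_def
  proof (intro Bochner_Integration.integral_cong refl)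
    fix y
    have "(\<integral>x. indicator {0..t} x *\<^sub>R (indicator {0..t} y *\<^sub>R h x y) \<partial>lborel)
        = (\<integral>x. indicator {0..t} y *\<^sub>R (indicator {0..t} x *\<^sub>R h x y) \<partial>lborel)"
      by (intro Bochner_Integration.integral_cong refl) (rule scaleR_left_commute)
    then show "(\<integral>x. indicator {0..t} x *\<^sub>R (indicator {0..t} y *\<^sub>R h x y) \<partial>lborel)
        = indicator {0..t} y *\<^sub>R (\<integral>x. indicator {0..t} x *\<^sub>R h x y \<partial>lborel)"
      by (simp only: integral_scaleR_right)
  qed
  finally show ?thesis .
qed

lemma transl:
  fixes f :: "real \<Rightarrow> 'b::{banach, second_countable_topology}"
  shows "(LINT r:{s..t}|lborel. f (r - s)) = (LINT w:{0..t-s}|lborel. f w)"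
proof -
  have "(LINT w:{0..t-s}|lborel. f w) = (\<integral>w. indicator {0..t-s} w *\<^sub>R f w \<partial>lborel)"
    by (simp add: set_lebesgue_integral_def)
  also have "\<dots> = \<bar>1\<bar> *\<^sub>R (\<integral>r. indicator {0..t-s} (-s + 1 * r) *\<^sub>R f (-s + 1 * r) \<partial>lborel)"
    by (rule lborel_integral_real_affine) simp
  also have "\<dots> = (\<integral>r. indicator {0..t-s} (-s + r) *\<^sub>R f (-s + r) \<partial>lborel)"
    by simp
  also have "\<dots> = (\<integral>r. indicator {s..t} r *\<^sub>R f (r - s) \<partial>lborel)"
    by (intro Bochner_Integration.integral_cong) (auto simp: indicator_def)
  finally show ?thesis by (simp add: set_lebesgue_integral_def)
qed



lemma lt_powr_iff:
  fixes b x u :: real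
  assumes "1 < b" "0 < x"
  shows "(x < b powr u) \<longleftrightarrow> (ln x / ln b < u)"
proof -
  have "(x < b powr u) \<longleftrightarrow> ln x < ln (b powr u)"
    using assms by (subst ln_less_cancel_iff) auto
  also have "ln (b powr u) = u * ln b" using assms by (simp add: ln_powr)
  also have "(ln x < u * ln b) \<longleftrightarrow> (ln x / ln b < u)"
    using assms by (simp add: pos_divide_less_eq)
  finally show ?thesis .
qed

definition beta :: "nat \<Rightarrow> (nat \<Rightarrow> complex) \<Rightarrow> nat \<Rightarrow> complex" where
  "beta q chi d = chi d * of_real (Defs.mangoldt d) / (of_nat d * of_real (ln (real q)))"

definition stepA :: "nat \<Rightarrow> (nat \<Rightarrow> complex) \<Rightarrow> real \<Rightarrow> real \<Rightarrow> complex" where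
  "stepA q chi T u = (\<Sum>n\<in>{n. 1\<le>n \<and> real n < real q powr T}.
      chi n / (of_nat n * of_real (ln (real q))) * indicator {v. ln (real n) / ln (real q) < v} u)"

definition stepB :: "nat \<Rightarrow> (nat \<Rightarrow> complex) \<Rightarrow> real \<Rightarrow> real \<Rightarrow> complex" where
  "stepB q chi T u = (\<Sum>n\<in>{n. 1\<le>n \<and> real n < real q powr T}.
      beta q chi n * indicator {v. ln (real n) / ln (real q) < v} u)"

lemma stepA_meas[measurable]: "stepA q chi T \<in> borel_measurable borel"
  unfolding stepA_def by measurable

lemma stepB_meas[measurable]: "stepB q chi T \<in> borel_measurable borel"
  unfolding stepB_def by measurable

lemma set_below_eq:
  assumes q: "q \<ge> 2" and uT: "u \<le> T"
  shows "{n::nat. 1\<le>n \<and> real n < real q powr T} \<inter> {n. ln (real n) / ln (real q) < u}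
         = {n::nat. 1\<le>n \<and> real n < real q powr u}"
proof -
  have q1: "real q > 1" using q by simp
  have mono: "real q powr u \<le> real q powr T" using q1 uT by (intro powr_mono) auto
  show ?thesis
  proof (intro equalityI subsetI)
    fix n assume "n \<in> {n::nat. 1\<le>n \<and> real n < real q powr T} \<inter> {n. ln (real n) / ln (real q) < u}"
    then show "n \<in> {n::nat. 1\<le>n \<and> real n < real q powr u}"
      using lt_powr_iff[OF q1, of "real n" u] by auto
  next
    fix n assume n: "n \<in> {n::nat. 1\<le>n \<and> real n < real q powr u}"
    then show "n \<in> {n::nat. 1\<le>n \<and> real n < real q powr T} \<inter> {n. ln (real n) / ln (real q) < u}"
      using lt_powr_iff[OF q1, of "real n" u] mono by auto
  qed
qed

lemma charA_step:
  assumes q: "q \<ge> 2" and uT: "u \<le> T"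
  shows "charA q chi u = stepA q chi T u"
proof -
  have "stepA q chi T u = (\<Sum>n\<in>{n::nat. 1\<le>n \<and> real n < real q powr T}.
      if n \<in> {n. ln (real n) / ln (real q) < u} then chi n / (of_nat n * of_real (ln (real q))) else 0)"
    unfolding stepA_def by (intro sum.cong refl) (auto simp: indicator_def)
  also have "\<dots> = (\<Sum>n\<in>{n::nat. 1\<le>n \<and> real n < real q powr T} \<inter> {n. ln (real n) / ln (real q) < u}.
      chi n / (of_nat n * of_real (ln (real q))))"
    by (rule sum.inter_restrict[symmetric]) (rule fin_below)
  also have "\<dots> = (\<Sum>n\<in>{n::nat. 1\<le>n \<and> real n < real q powr u}. chi n / (of_nat n * of_real (ln (real q))))"
    by (simp only: set_below_eq[OF q uT])
  also have "\<dots> = charA q chi u"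
    unfolding charA_def by (simp add: sum_divide_distrib divide_divide_eq_left)
  finally show ?thesis by simp
qed

lemma charB_step:
  assumes q: "q \<ge> 2" and uT: "u \<le> T"
  shows "charB q chi u = stepB q chi T u"
proof -
  have "stepB q chi T u = (\<Sum>n\<in>{n::nat. 1\<le>n \<and> real n < real q powr T}.
      if n \<in> {n. ln (real n) / ln (real q) < u} then beta q chi n else 0)"
    unfolding stepB_def by (intro sum.cong refl) (auto simp: indicator_def)
  also have "\<dots> = (\<Sum>n\<in>{n::nat. 1\<le>n \<and> real n < real q powr T} \<inter> {n. ln (real n) / ln (real q) < u}.
      beta q chi n)"
    by (rule sum.inter_restrict[symmetric]) (rule fin_below)
  also have "\<dots> = (\<Sum>n\<in>{n::nat. 1\<le>n \<and> real n < real q powr u}. beta q chi n)"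
    by (simp only: set_below_eq[OF q uT])
  also have "\<dots> = charB q chi u"
    unfolding charB_def beta_def by (simp add: sum_divide_distrib divide_divide_eq_left)
  finally show ?thesis by simp
qed

lemma charA_bound:
  assumes q: "q \<ge> 2" and cn: "\<And>n. norm (chi n) \<le> 1" and u: "0 \<le> u"
  shows "norm (charA q chi u) \<le> u + 1 / ln (real q)"
proof -
  define L where "L = ln (real q)"
  have L: "L > 0" using q by (simp add: L_def)
  have q1: "real q powr u \<ge> 1" using q u by (intro ge_one_powr_ge_zero) auto
  have "norm (\<Sum>n\<in>{n::nat. 1\<le>n \<and> real n < real q powr u}. chi n / of_nat n)
        \<le> (\<Sum>n\<in>{n::nat. 1\<le>n \<and> real n < real q powr u}. norm (chi n / of_nat n))"
    by (rule norm_sum)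
  also have "\<dots> \<le> (\<Sum>n\<in>{n::nat. 1\<le>n \<and> real n < real q powr u}. 1 / real n)"
    by (intro sum_mono) (auto simp: norm_divide intro: divide_right_mono cn)
  also have "\<dots> = Hs (real q powr u)" by (simp add: Hs_def)
  also have "\<dots> \<le> 1 + ln (real q powr u)" by (rule Hs_le[OF q1])
  also have "ln (real q powr u) = u * L" using q by (simp add: ln_powr L_def)
  finally have "norm (\<Sum>n\<in>{n::nat. 1\<le>n \<and> real n < real q powr u}. chi n / of_nat n) / L \<le> (1 + u * L) / L"
    using L by (intro divide_right_mono) auto
  then show ?thesis using L by (simp add: charA_def norm_divide L_def[symmetric] add_divide_distrib)
qed

lemma charA_lip:
  assumes q: "q \<ge> 2" and cn: "\<And>n. norm (chi n) \<le> 1" and r: "0 \<le> r" and rs: "r \<le> s"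
  shows "norm (charA q chi s - charA q chi r) \<le> (s - r) + 1 / ln (real q)"
proof -
  define L where "L = ln (real q)"
  have L: "L > 0" using q by (simp add: L_def)
  have q1: "real q powr r \<ge> 1" "real q powr s \<ge> 1" using q r rs by (intro ge_one_powr_ge_zero; simp)+
  define Sr where "Sr = {n::nat. 1\<le>n \<and> real n < real q powr r}"
  define Ss where "Ss = {n::nat. 1\<le>n \<and> real n < real q powr s}"
  have "real q powr r \<le> real q powr s" using q rs by (intro powr_mono) auto
  then have sub: "Sr \<subseteq> Ss" unfolding Sr_def Ss_def by auto
  have fin: "finite Ss" "finite Sr" unfolding Ss_def Sr_def by (rule fin_below)+
  have "charA q chi s - charA q chi r = ((\<Sum>n\<in>Ss. chi n / of_nat n) - (\<Sum>n\<in>Sr. chi n / of_nat n)) / L"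
    by (simp add: charA_def Ss_def Sr_def L_def diff_divide_distrib)
  also have "(\<Sum>n\<in>Ss. chi n / of_nat n) - (\<Sum>n\<in>Sr. chi n / of_nat n) = (\<Sum>n\<in>Ss - Sr. chi n / of_nat n)"
    by (rule sum_diff[OF fin(1) sub, symmetric])
  finally have eq: "charA q chi s - charA q chi r = (\<Sum>n\<in>Ss - Sr. chi n / of_nat n) / L" .
  have "norm (\<Sum>n\<in>Ss - Sr. chi n / of_nat n) \<le> (\<Sum>n\<in>Ss - Sr. norm (chi n / of_nat n))"
    by (rule norm_sum)
  also have "\<dots> \<le> (\<Sum>n\<in>Ss - Sr. 1 / real n)"
    by (intro sum_mono) (auto simp: norm_divide intro: divide_right_mono cn)
  also have "\<dots> = (\<Sum>n\<in>Ss. 1 / real n) - (\<Sum>n\<in>Sr. 1 / real n)"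
    by (rule sum_diff[OF fin(1) sub])
  also have "\<dots> = Hs (real q powr s) - Hs (real q powr r)" by (simp add: Hs_def Ss_def Sr_def)
  also have "\<dots> \<le> (1 + ln (real q powr s)) - ln (real q powr r)"
    using Hs_le[OF q1(2)] ln_le_Hs[of "real q powr r"] q1 by linarith
  also have "\<dots> = 1 + (s - r) * L" using q by (simp add: ln_powr L_def algebra_simps)
  finally have "norm (\<Sum>n\<in>Ss - Sr. chi n / of_nat n) / L \<le> (1 + (s - r) * L) / L"
    using L by (intro divide_right_mono) auto
  then show ?thesis using L by (simp add: eq norm_divide L_def[symmetric] add_divide_distrib)
qed

lemma beta_sum:
  assumes q: "q \<ge> 2" and cn: "\<And>n. norm (chi n) \<le> 1" and t: "0 \<le> t"
  shows "(\<Sum>d\<in>{d::nat. 1\<le>d \<and> real d < real q powr t}. norm (beta q chi d)) \<le> 4 * t + 2 / ln (real q)"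
proof -
  define L where "L = ln (real q)"
  have L: "L > 0" using q by (simp add: L_def)
  have q1: "real q powr t \<ge> 1" using q t by (intro ge_one_powr_ge_zero) auto
  have "(\<Sum>d\<in>{d::nat. 1\<le>d \<and> real d < real q powr t}. norm (beta q chi d))
      \<le> (\<Sum>d\<in>{d::nat. 1\<le>d \<and> real d < real q powr t}. Defs.mangoldt d / real d / L)"
  proof (intro sum_mono)
    fix d
    have "norm (beta q chi d) = norm (chi d) * Defs.mangoldt d / real d / L"
      using L mg_nonneg[of d] by (simp add: beta_def norm_divide norm_mult L_def)
    also have "\<dots> \<le> 1 * Defs.mangoldt d / real d / L"
      using L mg_nonneg[of d] cn[of d]
      by (intro divide_right_mono mult_right_mono) auto
    finally show "norm (beta q chi d) \<le> Defs.mangoldt d / real d / L" by simp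
  qed
  also have "\<dots> = (\<Sum>d\<in>{d::nat. 1\<le>d \<and> real d < real q powr t}. Defs.mangoldt d / real d) / L"
    by (simp add: sum_divide_distrib)
  also have "\<dots> \<le> (2 + 4 * ln (real q powr t)) / L"
    using L by (intro divide_right_mono chebyshev q1) auto
  also have "\<dots> = 4 * t + 2 / L" using q L by (simp add: ln_powr L_def field_simps)
  finally show ?thesis by (simp add: L_def)
qed

lemma charB_bound:
  assumes q: "q \<ge> 2" and cn: "\<And>n. norm (chi n) \<le> 1" and t: "0 \<le> t"
  shows "norm (charB q chi t) \<le> 4 * t + 2 / ln (real q)"
proof -
  have "charB q chi t = (\<Sum>d\<in>{d::nat. 1\<le>d \<and> real d < real q powr t}. beta q chi d)"
    unfolding charB_def beta_def by (simp add: sum_divide_distrib divide_divide_eq_left)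
  then have "norm (charB q chi t) \<le> (\<Sum>d\<in>{d::nat. 1\<le>d \<and> real d < real q powr t}. norm (beta q chi d))"
    by (simp add: norm_sum)
  also have "\<dots> \<le> 4 * t + 2 / ln (real q)" by (rule beta_sum[OF q cn t])
  finally show ?thesis .
qed



lemma powr_shift:
  assumes q: "q \<ge> 2" and d: "d \<ge> 1"
  shows "real q powr (t - ln (real d) / ln (real q)) = real q powr t / real d"
proof -
  have "real q powr (ln (real d) / ln (real q)) = exp (ln (real d) / ln (real q) * ln (real q))"
    using q by (simp add: powr_def)
  also have "\<dots> = real d" using q d by simp
  finally show ?thesis by (simp add: powr_diff)
qed

lemma ident:
  assumes q: "q \<ge> 2" and mult: "\<And>m n. chi (m*n) = chi m * chi n"
  shows "(\<Sum>n\<in>{n::nat. 1\<le>n \<and> real n < real q powr t}. chi n * of_real (ln (real n)) / of_nat n) / of_real ((ln (real q))^2)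
       = (\<Sum>d\<in>{d::nat. 1\<le>d \<and> real d < real q powr t}. beta q chi d * charA q chi (t - ln (real d) / ln (real q)))"
proof -
  define L where "L = ln (real q)"
  have L: "L > 0" using q by (simp add: L_def)
  have "(\<Sum>n\<in>{n::nat. 1\<le>n \<and> real n < real q powr t}. chi n * of_real (ln (real n)) / of_nat n)
    = (\<Sum>d\<in>{d::nat. 1\<le>d \<and> real d < real q powr t}. chi d * of_real (Defs.mangoldt d) / of_nat d *
              (\<Sum>m\<in>{m. 1\<le>m \<and> real m < real q powr t / real d}. chi m / of_nat m))"
    by (rule conv_id[OF mult])
  also have "\<dots> = (\<Sum>d\<in>{d::nat. 1\<le>d \<and> real d < real q powr t}. of_real L * of_real L * (beta q chi d * charA q chi (t - ln (real d) / ln (real q))))"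
  proof (intro sum.cong refl)
    fix d assume "d \<in> {d::nat. 1\<le>d \<and> real d < real q powr t}"
    then have d: "d \<ge> 1" by simp
    have "charA q chi (t - ln (real d) / ln (real q)) = (\<Sum>m\<in>{m. 1\<le>m \<and> real m < real q powr t / real d}. chi m / of_nat m) / of_real L"
      unfolding charA_def powr_shift[OF q d] L_def ..
    then show "chi d * of_real (Defs.mangoldt d) / of_nat d * (\<Sum>m\<in>{m. 1\<le>m \<and> real m < real q powr t / real d}. chi m / of_nat m)
       = of_real L * of_real L * (beta q chi d * charA q chi (t - ln (real d) / ln (real q)))"
      using L d by (simp add: beta_def L_def[symmetric] field_simps)
  qed
  also have "\<dots> = of_real L * of_real L * (\<Sum>d\<in>{d::nat. 1\<le>d \<and> real d < real q powr t}. beta q chi d * charA q chi (t - ln (real d) / ln (real q)))"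
    by (simp add: sum_distrib_left)
  finally show ?thesis using L by (simp add: L_def[symmetric] power2_eq_square field_simps)
qed

lemma abelL:
  assumes q: "q \<ge> 2" and t: "0 \<le> t"
  shows "(LINT u:{0..t}|lborel. stepA q chi t t - stepA q chi t u)
     = (\<Sum>n\<in>{n::nat. 1\<le>n \<and> real n < real q powr t}. chi n * of_real (ln (real n)) / of_nat n) / of_real ((ln (real q))^2)"
proof -
  define L where "L = ln (real q)"
  have L: "L > 0" using q by (simp add: L_def)
  have q1: "real q > 1" using q by simp
  define S where "S = {n::nat. 1\<le>n \<and> real n < real q powr t}"
  have finS: "finite S" unfolding S_def by (rule fin_below)
  define c where "c n = chi n / (of_nat n * of_real L)" for n
  define v where "v n = ln (real n) / L" for n
  have vS: "0 \<le> v n" "v n < t" if "n \<in> S" for n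
    using that lt_powr_iff[OF q1, of "real n" t] L by (auto simp: S_def v_def L_def)
  have pw: "indicator {0..t} u *\<^sub>R (stepA q chi t t - stepA q chi t u) = (\<Sum>n\<in>S. indicator {0..v n} u *\<^sub>R c n)" for u
  proof -
    have "stepA q chi t t - stepA q chi t u = (\<Sum>n\<in>S. c n * (indicator {w. v n < w} t - indicator {w. v n < w} u))"
      unfolding stepA_def S_def[symmetric] c_def[symmetric] L_def[symmetric] v_def[symmetric]
      by (simp add: sum_subtractf[symmetric] right_diff_distrib)
    also have "\<dots> = (\<Sum>n\<in>S. c n * (1 - indicator {w. v n < w} u))"
      using vS by (intro sum.cong refl) (auto simp: indicator_def)
    finally have eq: "stepA q chi t t - stepA q chi t u = (\<Sum>n\<in>S. c n * (1 - indicator {w. v n < w} u))" .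
    show ?thesis
      unfolding eq scaleR_sum_right
    proof (intro sum.cong refl)
      fix n assume n: "n \<in> S"
      show "indicator {0..t} u *\<^sub>R (c n * (1 - indicator {w. v n < w} u)) = indicator {0..v n} u *\<^sub>R c n"
        using vS[OF n] by (cases "0 \<le> u"; cases "u \<le> t"; cases "u \<le> v n") (auto simp: indicator_def)
    qed
  qed
  have "(LINT u:{0..t}|lborel. stepA q chi t t - stepA q chi t u) = (\<integral>u. (\<Sum>n\<in>S. indicator {0..v n} u *\<^sub>R c n) \<partial>lborel)"
    unfolding set_lebesgue_integral_def pw ..
  also have "\<dots> = (\<Sum>n\<in>S. \<integral>u. indicator {0..v n} u *\<^sub>R c n \<partial>lborel)"
    by (rule Bochner_Integration.integral_sum[where f="\<lambda>n u. indicator {0..v n} u *\<^sub>R c n"]) (auto intro!: integrable_scaleR_left integrable_real_indicator simp: emeasure_lborel_Icc_eq)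
  also have "\<dots> = (\<Sum>n\<in>S. of_real (v n) * c n)"
  proof (intro sum.cong refl)
    fix n assume n: "n \<in> S"
    have "(\<integral>u. indicator {0..v n} u *\<^sub>R c n \<partial>lborel) = (LINT u:{0..v n}|lborel. c n)"
      by (simp add: set_lebesgue_integral_def)
    also have "\<dots> = measure lborel {0..v n} *\<^sub>R c n" by (rule set_integral_const) (auto simp: emeasure_lborel_Icc_eq)
    also have "\<dots> = of_real (v n) * c n" using vS[OF n] by (simp add: scaleR_conv_of_real)
    finally show "(\<integral>u. indicator {0..v n} u *\<^sub>R c n \<partial>lborel) = of_real (v n) * c n" .
  qed
  also have "\<dots> = (\<Sum>n\<in>S. chi n * of_real (ln (real n)) / of_nat n / of_real (L^2))"
    using L by (intro sum.cong refl) (simp add: c_def v_def field_simps power2_eq_square)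
  also have "\<dots> = (\<Sum>n\<in>S. chi n * of_real (ln (real n)) / of_nat n) / of_real (L^2)"
    by (simp add: sum_divide_distrib)
  finally show ?thesis by (simp add: S_def L_def)
qed

lemma abelR:
  assumes q: "q \<ge> 2" and t: "0 \<le> t" and a0[measurable]: "a0 \<in> borel_measurable borel"
    and ab: "\<And>x. norm (a0 x) \<le> 1" and A0: "\<And>s. 0 \<le> s \<Longrightarrow> A0 s = (LINT u:{0..s}|lborel. a0 u)"
  shows "(\<Sum>d\<in>{d::nat. 1\<le>d \<and> real d < real q powr t}. beta q chi d * A0 (t - ln (real d) / ln (real q)))
       = (LINT s:{0..t}|lborel. a0 s * stepB q chi t (t - s))"
proof -
  define L where "L = ln (real q)"
  have L: "L > 0" using q by (simp add: L_def)
  have q1: "real q > 1" using q by simp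
  define S where "S = {n::nat. 1\<le>n \<and> real n < real q powr t}"
  have finS: "finite S" unfolding S_def by (rule fin_below)
  define v where "v n = ln (real n) / L" for n
  have vS: "0 \<le> v n" "v n < t" if "n \<in> S" for n
    using that lt_powr_iff[OF q1, of "real n" t] L by (auto simp: S_def v_def L_def)
  have pw: "indicator {0..t} s *\<^sub>R (a0 s * stepB q chi t (t - s)) = (\<Sum>d\<in>S. beta q chi d * (indicator {0..<t - v d} s *\<^sub>R a0 s))" for s
    unfolding stepB_def S_def[symmetric] L_def[symmetric] v_def[symmetric] scaleR_sum_right sum_distrib_left
  proof (intro sum.cong refl)
    fix d assume d: "d \<in> S"
    show "indicator {0..t} s *\<^sub>R (a0 s * (beta q chi d * indicator {w. v d < w} (t - s))) =
          beta q chi d * (indicator {0..<t - v d} s *\<^sub>R a0 s)"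
      using vS[OF d] by (cases "0 \<le> s"; cases "s \<le> t"; cases "v d < t - s") (auto simp: indicator_def)
  qed
  have si: "set_integrable lborel {0..<c} a0" for c
    by (rule bnd_set_integrable[where C=1]) (auto intro: ab, cases "0 \<le> c", auto)
  have "(LINT s:{0..t}|lborel. a0 s * stepB q chi t (t - s)) = (\<integral>s. (\<Sum>d\<in>S. beta q chi d * (indicator {0..<t - v d} s *\<^sub>R a0 s)) \<partial>lborel)"
    unfolding set_lebesgue_integral_def pw ..
  also have "\<dots> = (\<Sum>d\<in>S. \<integral>s. beta q chi d * (indicator {0..<t - v d} s *\<^sub>R a0 s) \<partial>lborel)"
  proof (rule Bochner_Integration.integral_sum[where f="\<lambda>d s. beta q chi d * (indicator {0..<t - v d} s *\<^sub>R a0 s)"])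
    fix d
    have "integrable lborel (\<lambda>s. indicator {0..<t - v d} s *\<^sub>R a0 s)"
      using si[of "t - v d"] by (simp add: set_integrable_def)
    then show "integrable lborel (\<lambda>s. beta q chi d * (indicator {0..<t - v d} s *\<^sub>R a0 s))"
      by (intro integrable_mult_right)
  qed
  also have "\<dots> = (\<Sum>d\<in>S. beta q chi d * A0 (t - v d))"
  proof (intro sum.cong refl)
    fix d assume d: "d \<in> S"
    have "(\<integral>s. beta q chi d * (indicator {0..<t - v d} s *\<^sub>R a0 s) \<partial>lborel) = beta q chi d * (LINT s:{0..<t - v d}|lborel. a0 s)"
      unfolding set_lebesgue_integral_def by (rule integral_mult_right_zero)
    also have "(LINT s:{0..<t - v d}|lborel. a0 s) = (LINT s:{0..t - v d}|lborel. a0 s)"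
    proof (rule set_integral_cong_set)
      show "set_borel_measurable lborel {0..<t - v d} a0" "set_borel_measurable lborel {0..t - v d} a0"
        by (auto simp: set_borel_measurable_def)
      show "AE x in lborel. (x \<in> {0..t - v d}) = (x \<in> {0..<t - v d})"
        using AE_lborel_singleton[of "t - v d"] by eventually_elim auto
    qed
    also have "\<dots> = A0 (t - v d)" using vS[OF d] by (simp add: A0)
    finally show "(\<integral>s. beta q chi d * (indicator {0..<t - v d} s *\<^sub>R a0 s) \<partial>lborel) = beta q chi d * A0 (t - v d)" .
  qed
  finally show ?thesis by (simp add: S_def v_def L_def)
qed



lemma unif_conv:
  fixes F :: "nat \<Rightarrow> real \<Rightarrow> complex" and G :: "real \<Rightarrow> complex" and e :: "nat \<Rightarrow> real"
  assumes pw: "\<And>s. s \<in> {0..T} \<Longrightarrow> (\<lambda>j. F j s) \<longlonglongrightarrow> G s"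
    and eqc: "\<And>j r s. r \<in> {0..T} \<Longrightarrow> s \<in> {0..T} \<Longrightarrow> norm (F j s - F j r) \<le> \<bar>s - r\<bar> + e j"
    and e: "e \<longlonglongrightarrow> 0"
    and Glip: "\<And>r s. r \<in> {0..T} \<Longrightarrow> s \<in> {0..T} \<Longrightarrow> norm (G s - G r) \<le> \<bar>s - r\<bar>"
    and eps: "\<epsilon> > 0"
  shows "eventually (\<lambda>j. \<forall>s\<in>{0..T}. norm (F j s - G s) \<le> \<epsilon>) sequentially"
proof -
  define \<delta> where "\<delta> = \<epsilon> / 5"
  have d: "\<delta> > 0" using eps by (simp add: \<delta>_def)
  define N where "N = nat \<lceil>T / \<delta>\<rceil>"
  define K where "K = {k::nat. k \<le> N \<and> real k * \<delta> \<le> T}"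
  have finK: "finite K" unfolding K_def by auto
  have ev1: "eventually (\<lambda>j. \<forall>k\<in>K. dist (F j (real k * \<delta>)) (G (real k * \<delta>)) < \<delta>) sequentially"
  proof (rule eventually_ball_finite[OF finK], intro ballI)
    fix k assume "k \<in> K"
    then have "real k * \<delta> \<in> {0..T}" using d by (auto simp: K_def)
    from tendstoD[OF pw[OF this] d]
    show "eventually (\<lambda>j. dist (F j (real k * \<delta>)) (G (real k * \<delta>)) < \<delta>) sequentially" .
  qed
  have ev2: "eventually (\<lambda>j. dist (e j) 0 < \<delta>) sequentially" by (rule tendstoD[OF e d])
  show ?thesis
    using ev1 ev2
  proof eventually_elim
    case (elim j)
    show ?case
    proof
      fix s assume s: "s \<in> {0..T}"
      define k where "k = nat \<lfloor>s / \<delta>\<rfloor>"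
      have s0: "s \<ge> 0" "s \<le> T" using s by auto
      have fl: "real k = of_int \<lfloor>s / \<delta>\<rfloor>" using s0 d by (simp add: k_def)
      have "real k \<le> s / \<delta>" using fl by linarith
      then have ks: "real k * \<delta> \<le> s" using d by (simp add: field_simps)
      have "s / \<delta> < real k + 1" using fl by linarith
      then have sk: "s - real k * \<delta> < \<delta>" using d by (simp add: field_simps)
      have "real k \<le> T / \<delta>" using ks s0 d by (simp add: field_simps)
      then have "k \<le> N" unfolding N_def by linarith
      then have kK: "k \<in> K" using ks s0 by (auto simp: K_def)
      define g where "g = real k * \<delta>"
      have g: "g \<in> {0..T}" using kK d by (auto simp: K_def g_def)
      have "norm (F j s - G s) = norm ((F j s - F j g) + (F j g - G g) + (G g - G s))"
        by (simp add: algebra_simps)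
      also have "\<dots> \<le> norm ((F j s - F j g) + (F j g - G g)) + norm (G g - G s)"
        by (rule norm_triangle_ineq)
      also have "\<dots> \<le> norm (F j s - F j g) + norm (F j g - G g) + norm (G g - G s)"
        using norm_triangle_ineq[of "F j s - F j g" "F j g - G g"] by simp
      finally have "norm (F j s - G s) \<le> norm (F j s - F j g) + norm (F j g - G g) + norm (G g - G s)" .
      also have "norm (F j s - F j g) \<le> \<bar>s - g\<bar> + e j" by (rule eqc[OF g s])
      also have "norm (F j g - G g) < \<delta>" using elim(1) kK by (auto simp: dist_norm g_def)
      also have "norm (G g - G s) \<le> \<bar>g - s\<bar>" by (rule Glip[OF s g])
      finally have "norm (F j s - G s) < \<bar>s - g\<bar> + e j + \<delta> + \<bar>g - s\<bar>" by simp
      moreover have "\<bar>s - g\<bar> < \<delta>" "\<bar>g - s\<bar> < \<delta>" using ks sk by (auto simp: g_def)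
      moreover have "e j < \<delta>" using elim(2) by (auto simp: dist_norm)
      ultimately show "norm (F j s - G s) \<le> \<epsilon>" using \<delta>_def by linarith
    qed
  qed
qed

lemma unique_cplx:
  fixes h :: "real \<Rightarrow> complex"
  assumes h[measurable]: "h \<in> borel_measurable borel"
    and bnd: "\<And>x. x \<in> {0..T} \<Longrightarrow> norm (h x) \<le> C"
    and zero: "\<And>t. t \<in> {0..T} \<Longrightarrow> (LINT x:{0..t}|lborel. h x) = 0"
  shows "AE x in lborel. x \<in> {0..T} \<longrightarrow> h x = 0"
proof -
  have "AE x in lborel. x \<in> {0..T} \<longrightarrow> Re (h x) = 0"
  proof (rule unique_real[where C=C])
    show "\<bar>Re (h x)\<bar> \<le> C" if "x \<in> {0..T}" for x
      using abs_Re_le_cmod[of "h x"] bnd[OF that] by linarith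
    show "(LINT x:{0..t}|lborel. Re (h x)) = 0" if "t \<in> {0..T}" for t
    proof -
      have "set_integrable lborel {0..t} h"
        by (rule bnd_set_integrable[where C=C]) (use that bnd in auto)
      then have "integrable lborel (\<lambda>x. indicator {0..t} x *\<^sub>R h x)" by (simp add: set_integrable_def)
      then have "(\<integral>x. Re (indicator {0..t} x *\<^sub>R h x) \<partial>lborel) = Re (\<integral>x. indicator {0..t} x *\<^sub>R h x \<partial>lborel)"
        by (rule integral_Re)
      moreover have "(\<lambda>x. Re (indicator {0..t} x *\<^sub>R h x)) = (\<lambda>x. indicator {0..t} x *\<^sub>R Re (h x))"
        by (auto simp: fun_eq_iff indicator_def)
      ultimately show ?thesis using zero[OF that] unfolding set_lebesgue_integral_def by simp
    qed
  qed measurable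
  moreover have "AE x in lborel. x \<in> {0..T} \<longrightarrow> Im (h x) = 0"
  proof (rule unique_real[where C=C])
    show "\<bar>Im (h x)\<bar> \<le> C" if "x \<in> {0..T}" for x
      using abs_Im_le_cmod[of "h x"] bnd[OF that] by linarith
    show "(LINT x:{0..t}|lborel. Im (h x)) = 0" if "t \<in> {0..T}" for t
    proof -
      have "set_integrable lborel {0..t} h"
        by (rule bnd_set_integrable[where C=C]) (use that bnd in auto)
      then have "integrable lborel (\<lambda>x. indicator {0..t} x *\<^sub>R h x)" by (simp add: set_integrable_def)
      then have "(\<integral>x. Im (indicator {0..t} x *\<^sub>R h x) \<partial>lborel) = Im (\<integral>x. indicator {0..t} x *\<^sub>R h x \<partial>lborel)"
        by (rule integral_Im)
      moreover have "(\<lambda>x. Im (indicator {0..t} x *\<^sub>R h x)) = (\<lambda>x. indicator {0..t} x *\<^sub>R Im (h x))"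
        by (auto simp: fun_eq_iff indicator_def)
      ultimately show ?thesis using zero[OF that] unfolding set_lebesgue_integral_def by simp
    qed
  qed measurable
  ultimately show ?thesis by eventually_elim (auto simp: complex_eq_iff)
qed



lemma F1:
  fixes a0 A0 :: "real \<Rightarrow> complex"
  assumes a0[measurable]: "a0 \<in> borel_measurable borel" and ab: "\<And>x. norm (a0 x) \<le> 1"
    and A0: "\<And>s. 0 \<le> s \<Longrightarrow> A0 s = (LINT u:{0..s}|lborel. a0 u)" and t: "0 \<le> t"
  shows "(LINT u:{0..t}|lborel. A0 t - A0 u) = (LINT w:{0..t}|lborel. of_real w * a0 w)"
proof -
  define H where "H u w = (if u < w then a0 w else 0)" for u w :: real
  have si: "set_integrable lborel A a0" if "A \<in> sets borel" "emeasure lborel A < \<infinity>" for A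
    by (rule bnd_set_integrable[where C=1]) (use that ab in auto)
  have step1: "A0 t - A0 u = (LINT w:{0..t}|lborel. H u w)" if u: "u \<in> {0..t}" for u
  proof -
    have un: "{0..t} = {0..u} \<union> {u<..t}" using u by auto
    have "A0 t = (LINT w:{0..u}|lborel. a0 w) + (LINT w:{u<..t}|lborel. a0 w)"
      unfolding A0[OF t] un
    proof (rule set_integral_Un)
      have ut: "u \<le> t" using u by simp
      have fin: "emeasure lborel {u<..t} < \<infinity>" by (subst emeasure_lborel_Ioc[OF ut]) simp
      show "set_integrable lborel {u<..t} a0" by (rule si[OF _ fin]) simp
      show "set_integrable lborel {0..u} a0" by (rule si) (auto simp: emeasure_lborel_Icc_eq)
    qed auto
    moreover have "A0 u = (LINT w:{0..u}|lborel. a0 w)" using u A0 by auto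
    moreover have "(LINT w:{0..t}|lborel. H u w) = (LINT w:{u<..t}|lborel. a0 w)"
      unfolding set_lebesgue_integral_def
      by (intro Bochner_Integration.integral_cong) (use u in \<open>auto simp: H_def indicator_def\<close>)
    ultimately show ?thesis by simp
  qed
  have "(LINT u:{0..t}|lborel. A0 t - A0 u) = (LINT u:{0..t}|lborel. LINT w:{0..t}|lborel. H u w)"
    by (rule set_lebesgue_integral_cong) (auto simp: step1)
  also have "\<dots> = (LINT w:{0..t}|lborel. LINT u:{0..t}|lborel. H u w)"
  proof (rule fubini_box[where C=1])
    show "(\<lambda>(u, w). H u w) \<in> borel_measurable (lborel \<Otimes>\<^sub>M lborel)"
      unfolding H_def by measurable
    show "norm (H u w) \<le> 1" for u w using ab[of w] by (simp add: H_def)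
  qed
  also have "\<dots> = (LINT w:{0..t}|lborel. of_real w * a0 w)"
  proof (rule set_lebesgue_integral_cong, simp, intro allI impI)
    fix w assume w: "w \<in> {0..t}"
    have "(LINT u:{0..t}|lborel. H u w) = (LINT u:{0..<w}|lborel. a0 w)"
      unfolding set_lebesgue_integral_def
      by (intro Bochner_Integration.integral_cong) (use w in \<open>auto simp: H_def indicator_def\<close>)
    also have "\<dots> = measure lborel {0..<w} *\<^sub>R a0 w"
      by (rule set_integral_const) (use w in auto)
    also have "\<dots> = of_real w * a0 w" using w by (simp add: scaleR_conv_of_real)
    finally show "(LINT u:{0..t}|lborel. H u w) = of_real w * a0 w" .
  qed
  finally show ?thesis .
qed

lemma F2:
  fixes a0 b0 B0 :: "real \<Rightarrow> complex"
  assumes a0[measurable]: "a0 \<in> borel_measurable borel" and ab: "\<And>x. norm (a0 x) \<le> 1"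
    and b0[measurable]: "b0 \<in> borel_measurable borel" and bb: "\<And>x. norm (b0 x) \<le> 1"
    and B0: "\<And>s. 0 \<le> s \<Longrightarrow> B0 s = (LINT u:{0..s}|lborel. b0 u)" and t: "0 \<le> t"
  shows "(LINT s:{0..t}|lborel. a0 s * B0 (t - s)) = (LINT r:{0..t}|lborel. LINT s:{0..r}|lborel. a0 s * b0 (r - s))"
proof -
  define K where "K r s = (if s \<le> r then a0 s * b0 (r - s) else 0)" for r s :: real
  have step1: "(LINT s:{0..r}|lborel. a0 s * b0 (r - s)) = (LINT s:{0..t}|lborel. K r s)" if r: "r \<in> {0..t}" for r
    unfolding set_lebesgue_integral_def
    by (intro Bochner_Integration.integral_cong) (use r in \<open>auto simp: K_def indicator_def\<close>)
  have "(LINT r:{0..t}|lborel. LINT s:{0..r}|lborel. a0 s * b0 (r - s)) = (LINT r:{0..t}|lborel. LINT s:{0..t}|lborel. K r s)"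
    by (rule set_lebesgue_integral_cong) (auto simp: step1)
  also have "\<dots> = (LINT s:{0..t}|lborel. LINT r:{0..t}|lborel. K r s)"
  proof (rule fubini_box[where C=1])
    show "(\<lambda>(r, s). K r s) \<in> borel_measurable (lborel \<Otimes>\<^sub>M lborel)"
      unfolding K_def by measurable
    show "norm (K r s) \<le> 1" for r s
      using ab[of s] bb[of "r - s"] by (simp add: K_def norm_mult mult_le_one)
  qed
  also have "\<dots> = (LINT s:{0..t}|lborel. a0 s * B0 (t - s))"
  proof (rule set_lebesgue_integral_cong, simp, intro allI impI)
    fix s assume s: "s \<in> {0..t}"
    have "(LINT r:{0..t}|lborel. K r s) = (LINT r:{s..t}|lborel. a0 s * b0 (r - s))"
      unfolding set_lebesgue_integral_def
      by (intro Bochner_Integration.integral_cong) (use s in \<open>auto simp: K_def indicator_def\<close>)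
    also have "\<dots> = a0 s * (LINT r:{s..t}|lborel. b0 (r - s))"
      by (rule set_integral_mult_right)
    also have "(LINT r:{s..t}|lborel. b0 (r - s)) = (LINT w:{0..t-s}|lborel. b0 w)"
      by (rule transl)
    also have "\<dots> = B0 (t - s)" using s B0 by auto
    finally show "(LINT r:{0..t}|lborel. K r s) = a0 s * B0 (t - s)" .
  qed
  finally show ?thesis by simp
qed



theorem lemma2p2:
  fixes q :: "nat \<Rightarrow> nat"
    and chi :: "nat \<Rightarrow> nat \<Rightarrow> complex"
    and A B a b :: "real \<Rightarrow> complex"
  assumes q_prime: "\<And>j. prime (q j)"
    and q_lim: "filterlim q at_top sequentially"
    and chi: "\<And>j. dirichlet_char (q j) (chi j)"
    and A_lim: "\<And>t. t \<ge> 0 \<Longrightarrow> ((\<lambda>j. charA (q j) (chi j) t) \<longlongrightarrow> A t) sequentially"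
    and B_lim: "\<And>t. t \<ge> 0 \<Longrightarrow> ((\<lambda>j. charB (q j) (chi j) t) \<longlongrightarrow> B t) sequentially"
    and A_lip: "\<And>s t. s \<ge> 0 \<Longrightarrow> t \<ge> 0 \<Longrightarrow> norm (A t - A s) \<le> \<bar>t - s\<bar>"
    and B_lip: "\<And>s t. s \<ge> 0 \<Longrightarrow> t \<ge> 0 \<Longrightarrow> norm (B t - B s) \<le> \<bar>t - s\<bar>"
    and a_meas: "set_borel_measurable lborel {0..} a"
    and b_meas: "set_borel_measurable lborel {0..} b"
    and a_bound: "\<And>u. u \<ge> 0 \<Longrightarrow> norm (a u) \<le> 1"
    and b_bound: "\<And>u. u \<ge> 0 \<Longrightarrow> norm (b u) \<le> 1"
    and A_int: "\<And>t. t \<ge> 0 \<Longrightarrow> A t = (LINT u:{0..t}|lborel. a u)"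
    and B_int: "\<And>t. t \<ge> 0 \<Longrightarrow> B t = (LINT u:{0..t}|lborel. b u)"
  shows "AE t in lborel. t > 0 \<longrightarrow> of_real t * a t = (LINT u:{0..t}|lborel. a u * b (t - u))"
proof -
  have q2: "q j \<ge> 2" for j using q_prime[of j] by (rule prime_ge_2_nat)
  have cn: "norm (chi j n) \<le> 1" for j n by (rule char_norm[OF chi])
  have cm: "chi j (m*n) = chi j m * chi j n" for j m n using chi[of j] by (simp add: dirichlet_char_def)
  define a0 where "a0 x = indicator {0..} x *\<^sub>R a x" for x
  define b0 where "b0 x = indicator {0..} x *\<^sub>R b x" for x
  have a0m[measurable]: "a0 \<in> borel_measurable borel"
    using a_meas by (simp add: set_borel_measurable_def a0_def[abs_def])
  have b0m[measurable]: "b0 \<in> borel_measurable borel"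
    using b_meas by (simp add: set_borel_measurable_def b0_def[abs_def])
  have ab0: "norm (a0 x) \<le> 1" for x using a_bound[of x] by (auto simp: a0_def indicator_def)
  have bb0: "norm (b0 x) \<le> 1" for x using b_bound[of x] by (auto simp: b0_def indicator_def)
  define A0 where "A0 s = A (max 0 s)" for s
  define B0 where "B0 s = B (max 0 s)" for s
  have A0_int: "A0 s = (LINT u:{0..s}|lborel. a0 u)" if "0 \<le> s" for s
  proof -
    have "A0 s = (LINT u:{0..s}|lborel. a u)" using that by (simp add: A0_def A_int)
    also have "\<dots> = (LINT u:{0..s}|lborel. a0 u)"
      by (rule set_lebesgue_integral_cong) (auto simp: a0_def)
    finally show ?thesis .
  qed
  have B0_int: "B0 s = (LINT u:{0..s}|lborel. b0 u)" if "0 \<le> s" for s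
  proof -
    have "B0 s = (LINT u:{0..s}|lborel. b u)" using that by (simp add: B0_def B_int)
    also have "\<dots> = (LINT u:{0..s}|lborel. b0 u)"
      by (rule set_lebesgue_integral_cong) (auto simp: b0_def)
    finally show ?thesis .
  qed
  have A0_lip: "norm (A0 x - A0 y) \<le> \<bar>x - y\<bar>" for x y
  proof -
    have "norm (A0 x - A0 y) \<le> \<bar>max 0 x - max 0 y\<bar>" unfolding A0_def by (rule A_lip) auto
    also have "\<dots> \<le> \<bar>x - y\<bar>" by (auto simp: max_def abs_if)
    finally show ?thesis .
  qed
  have B0_lip: "norm (B0 x - B0 y) \<le> \<bar>x - y\<bar>" for x y
  proof -
    have "norm (B0 x - B0 y) \<le> \<bar>max 0 x - max 0 y\<bar>" unfolding B0_def by (rule B_lip) auto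
    also have "\<dots> \<le> \<bar>x - y\<bar>" by (auto simp: max_def abs_if)
    finally show ?thesis .
  qed
  have A0m[measurable]: "A0 \<in> borel_measurable borel"
  proof (rule borel_measurable_continuous_onI, rule lipschitz_on_continuous_on)
    show "1-lipschitz_on UNIV A0" by (rule lipschitz_onI) (auto simp: dist_norm A0_lip)
  qed
  have B0m[measurable]: "B0 \<in> borel_measurable borel"
  proof (rule borel_measurable_continuous_onI, rule lipschitz_on_continuous_on)
    show "1-lipschitz_on UNIV B0" by (rule lipschitz_onI) (auto simp: dist_norm B0_lip)
  qed
  define e where "e j = 1 / ln (real (q j))" for j
  have e_lim: "e \<longlonglongrightarrow> 0"
  proof -
    have "filterlim (\<lambda>j. real (q j)) at_top sequentially"
      by (rule filterlim_compose[OF filterlim_real_sequentially q_lim])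
    then have "filterlim (\<lambda>j. ln (real (q j))) at_top sequentially"
      by (rule filterlim_compose[OF ln_at_top])
    then have "(\<lambda>j. inverse (ln (real (q j)))) \<longlonglongrightarrow> 0" by (rule tendsto_inverse_0_at_top)
    then show ?thesis by (simp add: e_def[abs_def] divide_inverse)
  qed
  have e_le: "e j \<le> 2" "e j > 0" for j
  proof -
    have "ln 2 \<le> ln (real (q j))" using q2[of j] by simp
    moreover have "2/3 \<le> ln (2::real)" by (rule ln2_ge_two_thirds)
    ultimately have l: "2/3 \<le> ln (real (q j))" by linarith
    then show "e j \<le> 2" unfolding e_def by (simp add: field_simps)
    show "e j > 0" using l unfolding e_def by simp
  qed
  have main: "(LINT u:{0..t}|lborel. A0 t - A0 u) = (LINT s:{0..t}|lborel. a0 s * B0 (t - s))"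
    if t: "0 \<le> t" for t
  proof -
    define S where "S j = {d::nat. 1\<le>d \<and> real d < real (q j) powr t}" for j
    define v where "v j d = ln (real d) / ln (real (q j))" for j d
    have vS: "0 \<le> v j d" "v j d < t" if "d \<in> S j" for j d
    proof -
      have q1: "real (q j) > 1" using q2[of j] by simp
      show "0 \<le> v j d" using that q1 by (auto simp: v_def S_def)
      show "v j d < t" using that lt_powr_iff[OF q1, of "real d" t] by (auto simp: v_def S_def)
    qed
    define LH where "LH j = (LINT u:{0..t}|lborel. stepA (q j) (chi j) t t - stepA (q j) (chi j) t u)" for j
    define RH where "RH j = (\<Sum>d\<in>S j. beta (q j) (chi j) d * charA (q j) (chi j) (t - v j d))" for j
    define R where "R j = (\<Sum>d\<in>S j. beta (q j) (chi j) d * A0 (t - v j d))" for j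
    define I where "I j = (LINT s:{0..t}|lborel. a0 s * stepB (q j) (chi j) t (t - s))" for j
    have eqLR: "LH j = RH j" for j
      unfolding LH_def RH_def S_def v_def
      by (subst abelL[OF q2 t]) (rule ident[OF q2 cm])
    have RI: "R j = I j" for j
      unfolding R_def I_def S_def v_def
      by (rule abelR[OF q2 t a0m ab0 A0_int])
    have LHlim: "LH \<longlonglongrightarrow> (LINT u:{0..t}|lborel. A0 t - A0 u)"
    proof -
      have "(\<lambda>j. \<integral>u. indicator {0..t} u *\<^sub>R (stepA (q j) (chi j) t t - stepA (q j) (chi j) t u) \<partial>lborel)
         \<longlonglongrightarrow> (\<integral>u. indicator {0..t} u *\<^sub>R (A0 t - A0 u) \<partial>lborel)"
      proof (rule integral_dominated_convergence[where w="\<lambda>u. indicator {0..t} u * (2 * t + 4)"])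
        show "(\<lambda>u. indicator {0..t} u *\<^sub>R (A0 t - A0 u)) \<in> borel_measurable lborel" by simp
        show "(\<lambda>u. indicator {0..t} u *\<^sub>R (stepA (q j) (chi j) t t - stepA (q j) (chi j) t u)) \<in> borel_measurable lborel" for j
          by simp
        show "integrable lborel (\<lambda>u. indicator {0..t} u * (2 * t + 4))"
          by (intro integrable_mult_left integrable_real_indicator) (auto simp: emeasure_lborel_Icc_eq)
        show "AE u in lborel. (\<lambda>j. indicator {0..t} u *\<^sub>R (stepA (q j) (chi j) t t - stepA (q j) (chi j) t u))
               \<longlonglongrightarrow> indicator {0..t} u *\<^sub>R (A0 t - A0 u)"
        proof (intro AE_I2)
          fix u show "(\<lambda>j. indicator {0..t} u *\<^sub>R (stepA (q j) (chi j) t t - stepA (q j) (chi j) t u))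
               \<longlonglongrightarrow> indicator {0..t} u *\<^sub>R (A0 t - A0 u)"
          proof (cases "u \<in> {0..t}")
            case True
            have "(\<lambda>j. charA (q j) (chi j) t - charA (q j) (chi j) u) \<longlonglongrightarrow> A t - A u"
              using True t by (intro tendsto_diff A_lim) auto
            moreover have "charA (q j) (chi j) t - charA (q j) (chi j) u = stepA (q j) (chi j) t t - stepA (q j) (chi j) t u" for j
              using True charA_step[OF q2[of j], where u=t and T=t and chi="chi j"]
                charA_step[OF q2[of j], where u=u and T=t and chi="chi j"] by simp
            moreover have "A t - A u = A0 t - A0 u" using True t by (simp add: A0_def)
            ultimately show ?thesis using True by simp
          next
            case False
            then show ?thesis by simp
          qed
        qed
        show "AE u in lborel. norm (indicator {0..t} u *\<^sub>R (stepA (q j) (chi j) t t - stepA (q j) (chi j) t u))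
              \<le> indicator {0..t} u * (2 * t + 4)" for j
        proof (intro AE_I2)
          fix u show "norm (indicator {0..t} u *\<^sub>R (stepA (q j) (chi j) t t - stepA (q j) (chi j) t u))
              \<le> indicator {0..t} u * (2 * t + 4)"
          proof (cases "u \<in> {0..t}")
            case True
            have "norm (stepA (q j) (chi j) t t - stepA (q j) (chi j) t u) = norm (charA (q j) (chi j) t - charA (q j) (chi j) u)"
              using True charA_step[OF q2[of j], where u=t and T=t and chi="chi j"]
                charA_step[OF q2[of j], where u=u and T=t and chi="chi j"] by simp
            also have "\<dots> \<le> norm (charA (q j) (chi j) t) + norm (charA (q j) (chi j) u)"
              by (rule norm_triangle_ineq4)
            also have "\<dots> \<le> (t + e j) + (u + e j)"
              using True t by (intro add_mono) (auto simp: e_def intro!: charA_bound[OF q2 cn])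
            also have "\<dots> \<le> 2 * t + 4" using True e_le[of j] by auto
            finally show ?thesis using True by simp
          next
            case False
            then show ?thesis by simp
          qed
        qed
      qed
      then show ?thesis by (simp add: LH_def[abs_def] set_lebesgue_integral_def)
    qed
    have Ilim: "I \<longlonglongrightarrow> (LINT s:{0..t}|lborel. a0 s * B0 (t - s))"
    proof -
      have "(\<lambda>j. \<integral>s. indicator {0..t} s *\<^sub>R (a0 s * stepB (q j) (chi j) t (t - s)) \<partial>lborel)
         \<longlonglongrightarrow> (\<integral>s. indicator {0..t} s *\<^sub>R (a0 s * B0 (t - s)) \<partial>lborel)"
      proof (rule integral_dominated_convergence[where w="\<lambda>s. indicator {0..t} s * (4 * t + 4)"])
        show "(\<lambda>s. indicator {0..t} s *\<^sub>R (a0 s * B0 (t - s))) \<in> borel_measurable lborel" by simp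
        show "(\<lambda>s. indicator {0..t} s *\<^sub>R (a0 s * stepB (q j) (chi j) t (t - s))) \<in> borel_measurable lborel" for j
          by simp
        show "integrable lborel (\<lambda>s. indicator {0..t} s * (4 * t + 4))"
          by (intro integrable_mult_left integrable_real_indicator) (auto simp: emeasure_lborel_Icc_eq)
        show "AE s in lborel. (\<lambda>j. indicator {0..t} s *\<^sub>R (a0 s * stepB (q j) (chi j) t (t - s)))
               \<longlonglongrightarrow> indicator {0..t} s *\<^sub>R (a0 s * B0 (t - s))"
        proof (intro AE_I2)
          fix s show "(\<lambda>j. indicator {0..t} s *\<^sub>R (a0 s * stepB (q j) (chi j) t (t - s)))
               \<longlonglongrightarrow> indicator {0..t} s *\<^sub>R (a0 s * B0 (t - s))"
          proof (cases "s \<in> {0..t}")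
            case True
            have "(\<lambda>j. a0 s * charB (q j) (chi j) (t - s)) \<longlonglongrightarrow> a0 s * B (t - s)"
              using True t by (intro tendsto_mult tendsto_const B_lim) auto
            moreover have "charB (q j) (chi j) (t - s) = stepB (q j) (chi j) t (t - s)" for j
              using True by (intro charB_step[OF q2]) auto
            moreover have "B (t - s) = B0 (t - s)" using True t by (simp add: B0_def)
            ultimately show ?thesis using True by simp
          next
            case False
            then show ?thesis by simp
          qed
        qed
        show "AE s in lborel. norm (indicator {0..t} s *\<^sub>R (a0 s * stepB (q j) (chi j) t (t - s)))
              \<le> indicator {0..t} s * (4 * t + 4)" for j
        proof (intro AE_I2)
          fix s show "norm (indicator {0..t} s *\<^sub>R (a0 s * stepB (q j) (chi j) t (t - s)))
              \<le> indicator {0..t} s * (4 * t + 4)"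
          proof (cases "s \<in> {0..t}")
            case True
            have "norm (a0 s * stepB (q j) (chi j) t (t - s)) = norm (a0 s) * norm (charB (q j) (chi j) (t - s))"
              using True charB_step[OF q2[of j], where u="t - s" and T=t and chi="chi j"] by (simp add: norm_mult)
            also have "\<dots> \<le> 1 * (4 * (t - s) + 2 * e j)"
              using True t ab0[of s]
              by (intro mult_mono) (auto simp: e_def intro!: order_trans[OF charB_bound[OF q2 cn]])
            also have "\<dots> \<le> 4 * t + 4" using True e_le[of j] by auto
            finally show ?thesis using True by simp
          next
            case False
            then show ?thesis by simp
          qed
        qed
      qed
      then show ?thesis by (simp add: I_def[abs_def] set_lebesgue_integral_def)
    qed
    have RHR: "(\<lambda>j. RH j - R j) \<longlonglongrightarrow> 0"
    proof (rule tendstoI)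
      fix \<epsilon> :: real assume eps: "\<epsilon> > 0"
      define \<epsilon>' where "\<epsilon>' = \<epsilon> / (2 * (4 * t + 4))"
      have eps': "\<epsilon>' > 0" using eps t by (simp add: \<epsilon>'_def)
      have unif: "eventually (\<lambda>j. \<forall>s\<in>{0..t}. norm (charA (q j) (chi j) s - A0 s) \<le> \<epsilon>') sequentially"
      proof (rule unif_conv[OF _ _ e_lim _ eps'])
        show "(\<lambda>j. charA (q j) (chi j) s) \<longlonglongrightarrow> A0 s" if "s \<in> {0..t}" for s
          using A_lim[of s] that by (simp add: A0_def)
        show "norm (charA (q j) (chi j) s - charA (q j) (chi j) r) \<le> \<bar>s - r\<bar> + e j"
          if "r \<in> {0..t}" "s \<in> {0..t}" for j r s
        proof (cases "r \<le> s")
          case True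
          then show ?thesis using that charA_lip[OF q2 cn, of r s j] by (simp add: e_def)
        next
          case False
          then show ?thesis using that charA_lip[OF q2 cn, of s r j]
            by (simp add: e_def norm_minus_commute)
        qed
        show "norm (A0 s - A0 r) \<le> \<bar>s - r\<bar>" for r s by (rule A0_lip)
      qed
      then show "eventually (\<lambda>j. dist (RH j - R j) 0 < \<epsilon>) sequentially"
      proof eventually_elim
        case (elim j)
        have "norm (RH j - R j) = norm (\<Sum>d\<in>S j. beta (q j) (chi j) d * (charA (q j) (chi j) (t - v j d) - A0 (t - v j d)))"
          by (simp add: RH_def R_def sum_subtractf[symmetric] right_diff_distrib)
        also have "\<dots> \<le> (\<Sum>d\<in>S j. norm (beta (q j) (chi j) d) * \<epsilon>')"
        proof (rule order_trans[OF norm_sum], intro sum_mono)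
          fix d assume d: "d \<in> S j"
          have "t - v j d \<in> {0..t}" using vS[OF d] by auto
          then have "norm (charA (q j) (chi j) (t - v j d) - A0 (t - v j d)) \<le> \<epsilon>'" using elim by blast
          then show "norm (beta (q j) (chi j) d * (charA (q j) (chi j) (t - v j d) - A0 (t - v j d))) \<le> norm (beta (q j) (chi j) d) * \<epsilon>'"
            by (simp add: norm_mult mult_left_mono)
        qed
        also have "\<dots> = (\<Sum>d\<in>S j. norm (beta (q j) (chi j) d)) * \<epsilon>'" by (simp add: sum_distrib_right)
        also have "\<dots> \<le> (4 * t + 2 * e j) * \<epsilon>'"
          using eps' beta_sum[OF q2 cn t, of j] by (intro mult_right_mono) (auto simp: S_def e_def)
        also have "\<dots> \<le> (4 * t + 4) * \<epsilon>'"
          using eps' e_le[of j] by (intro mult_right_mono) auto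
        also have "\<dots> = \<epsilon> / 2" using t by (simp add: \<epsilon>'_def field_simps)
        also have "\<dots> < \<epsilon>" using eps by simp
        finally show ?case by (simp add: dist_norm)
      qed
    qed
    have "(\<lambda>j. LH j - I j) \<longlonglongrightarrow> (LINT u:{0..t}|lborel. A0 t - A0 u) - (LINT s:{0..t}|lborel. a0 s * B0 (t - s))"
      by (intro tendsto_diff LHlim Ilim)
    moreover have "(\<lambda>j. LH j - I j) = (\<lambda>j. RH j - R j)" by (simp add: eqLR RI fun_eq_iff)
    ultimately have "(LINT u:{0..t}|lborel. A0 t - A0 u) - (LINT s:{0..t}|lborel. a0 s * B0 (t - s)) = 0"
      using RHR LIMSEQ_unique by metis
    then show ?thesis by simp
  qed
  have aR: "norm (of_real x * a0 x) \<le> x" if "0 \<le> x" for x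
  proof -
    have "x * norm (a0 x) \<le> x * 1" by (rule mult_left_mono) (use ab0 that in auto)
    then show ?thesis using that by (simp add: norm_mult)
  qed
  define G where "G r = (LINT s:{0..r}|lborel. a0 s * b0 (r - s))" for r
  define h where "h r = of_real r * a0 r - G r" for r
  have Gm[measurable]: "G \<in> borel_measurable borel"
  proof -
    have "(\<lambda>r. \<integral>s. indicator {0..r} s *\<^sub>R (a0 s * b0 (r - s)) \<partial>lborel) \<in> borel_measurable lborel"
    proof (rule sigma_finite_measure.borel_measurable_lebesgue_integral[OF sigma_finite_lborel])
      have "(\<lambda>(r, s). indicator {0..r} s *\<^sub>R (a0 s * b0 (r - s))) = (\<lambda>p. indicator {p::real\<times>real. 0 \<le> snd p \<and> snd p \<le> fst p} p *\<^sub>R (a0 (snd p) * b0 (fst p - snd p)))"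
        by (auto simp: fun_eq_iff indicator_def)
      also have "\<dots> \<in> borel_measurable (lborel \<Otimes>\<^sub>M lborel)" by measurable
      finally show "(\<lambda>(r, s). indicator {0..r} s *\<^sub>R (a0 s * b0 (r - s))) \<in> borel_measurable (lborel \<Otimes>\<^sub>M lborel)" .
    qed
    then show ?thesis by (simp add: G_def[abs_def] set_lebesgue_integral_def)
  qed
  have hm[measurable]: "h \<in> borel_measurable borel" unfolding h_def[abs_def] by measurable
  have Gb: "norm (G r) \<le> r" if "0 \<le> r" for r
  proof -
    have "norm (G r) \<le> 1 * measure lborel {0..r}"
      unfolding G_def
      by (rule set_int_bound) (auto simp: emeasure_lborel_Icc_eq norm_mult intro: mult_le_one ab0 bb0)
    then show ?thesis using that by simp
  qed
  have hb: "norm (h r) \<le> 2 * T" if "r \<in> {0..T}" for r T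
  proof -
    have "norm (h r) \<le> norm (of_real r * a0 r) + norm (G r)" unfolding h_def by (rule norm_triangle_ineq4)
    also have "norm (of_real r * a0 r) \<le> r" using that aR by auto
    also have "norm (G r) \<le> r" using that Gb by auto
    finally show ?thesis using that by simp
  qed
  have hzero: "(LINT x:{0..t}|lborel. h x) = 0" if "0 \<le> t" for t
  proof -
    have si1: "set_integrable lborel {0..t} (\<lambda>x. of_real x * a0 x)"
      by (rule bnd_set_integrable[where C=t]) (use aR in \<open>auto simp: emeasure_lborel_Icc_eq intro: order_trans\<close>)
    have si2: "set_integrable lborel {0..t} G"
      by (rule bnd_set_integrable[where C=t]) (use Gb in \<open>auto simp: emeasure_lborel_Icc_eq intro: order_trans\<close>)
    have "(LINT x:{0..t}|lborel. h x) = (LINT x:{0..t}|lborel. of_real x * a0 x) - (LINT x:{0..t}|lborel. G x)"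
      unfolding h_def by (rule set_integral_diff(2)[OF si1 si2])
    also have "(LINT x:{0..t}|lborel. of_real x * a0 x) = (LINT u:{0..t}|lborel. A0 t - A0 u)"
      by (rule F1[OF a0m ab0 A0_int that, symmetric])
    also have "\<dots> = (LINT s:{0..t}|lborel. a0 s * B0 (t - s))" by (rule main[OF that])
    also have "\<dots> = (LINT x:{0..t}|lborel. G x)"
      unfolding G_def by (rule F2[OF a0m ab0 b0m bb0 B0_int that])
    finally show ?thesis by simp
  qed
  have "AE x in lborel. \<forall>n::nat. x \<in> {0..real n} \<longrightarrow> h x = 0"
  proof (subst AE_all_countable, intro allI)
    fix n :: nat
    show "AE x in lborel. x \<in> {0..real n} \<longrightarrow> h x = 0"
      by (rule unique_cplx[where C="2 * real n"]) (auto intro: hb hzero)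
  qed
  then show ?thesis
  proof (rule AE_mp, intro AE_I2 impI)
    fix x :: real assume H: "\<forall>n::nat. x \<in> {0..real n} \<longrightarrow> h x = 0" and x: "0 < x"
    obtain n :: nat where "x \<le> real n" using real_arch_simple by blast
    then have "h x = 0" using H x by auto
    then have "of_real x * a0 x = G x" by (simp add: h_def)
    moreover have "a0 x = a x" using x by (simp add: a0_def)
    moreover have "G x = (LINT u:{0..x}|lborel. a u * b (x - u))"
      unfolding G_def by (rule set_lebesgue_integral_cong) (auto simp: a0_def b0_def)
    ultimately show "of_real x * a x = (LINT u:{0..x}|lborel. a u * b (x - u))" by simp
  qed
qed


end
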